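(* Let $n\in\mathbb{N}$ and $1\le K\le 2^n$. Let $\varphi$ be a uniformly random permutation of $\{0,1\}^{2n}$ among those having exactly $K$ zero pairs. Any quantum algorithm that makes $T$ queries to $\varphi$ and $\varphi^{-1}$ and outputs a zero pair of $\varphi$ with probability $\epsilon>0$ satisfies $$\epsilon\le\frac{8(T+1)^2K}{2^n}.$$
   Context: A zero pair of a permutation $\varphi$ of $\{0,1\}^{2n}$ is a pair $(x,y)\in\{0,1\}^n\times\{0,1\}^n$ with $\varphi(x\|0^n)=y\|0^n$. Queries are to the unitaries $O_\varphi:|a\rangle|b\rangle\mapsto|a\rangle|b\oplus\varphi(a)\rangle$ and $O_{\varphi^{-1}}:|a\rangle|b\rangle\mapsto|a\rangle|b\oplus\varphi^{-1}(a)\rangle$; the success probability is over $\varphi$ and the algorithm's internal randomness and measurements. *)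

theory Defs
  imports Complex_Main "HOL-Combinatorics.Permutations"
begin

text \<open>Bit strings of length m are encoded (big-endian) as naturals below 2^m,
so the concatenation x || y of x in {0,1}^n and y in {0,1}^n is x * 2^n + y,
and x || 0^n is x * 2^n.  Bitwise XOR of strings is xor on naturals.\<close>

definition is_perm :: "nat \<Rightarrow> (nat \<Rightarrow> nat) \<Rightarrow> bool" where
  "is_perm n \<phi> \<longleftrightarrow> \<phi> permutes {..<2^(2*n)}"

definition zero_pairs :: "nat \<Rightarrow> (nat \<Rightarrow> nat) \<Rightarrow> (nat \<times> nat) set" where
  "zero_pairs n \<phi> = {(x, y). x < 2^n \<and> y < 2^n \<and> \<phi> (x * 2^n) = y * 2^n}"

definition perms_K :: "nat \<Rightarrow> nat \<Rightarrow> (nat \<Rightarrow> nat) set" where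
  "perms_K n K = {\<phi>. is_perm n \<phi> \<and> card (zero_pairs n \<phi>) = K}"

text \<open>Quantum state space: registers |a>|b>|w> with a, b in {0,1}^(2n) and a
workspace register w < W.
Vectors are functions nat => complex on {..<dim}; matrices are nat => nat => complex.\<close>

definition qdim :: "nat \<Rightarrow> nat \<Rightarrow> nat" where
  "qdim n W = 2^(2*n) * 2^(2*n) * W"

definition enc :: "nat \<Rightarrow> nat \<Rightarrow> nat \<Rightarrow> nat \<Rightarrow> nat \<Rightarrow> nat" where
  "enc n W a b w = (a * 2^(2*n) + b) * W + w"

definition mat_vec :: "nat \<Rightarrow> (nat \<Rightarrow> nat \<Rightarrow> complex) \<Rightarrow> (nat \<Rightarrow> complex) \<Rightarrow> (nat \<Rightarrow> complex)" where
  "mat_vec D U v = (\<lambda>i. if i < D then (\<Sum>k<D. U i k * v k) else 0)"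

definition unitary_mat :: "nat \<Rightarrow> (nat \<Rightarrow> nat \<Rightarrow> complex) \<Rightarrow> bool" where
  "unitary_mat D U \<longleftrightarrow>
     (\<forall>i<D. \<forall>j<D. (\<Sum>k<D. U i k * cnj (U j k)) = (if i = j then 1 else 0))"

text \<open>Standard oracle |a>|b>|w> |-> |a>|b xor f(a)>|w> (acting on all of the space).\<close>
definition oracle_apply :: "nat \<Rightarrow> nat \<Rightarrow> (nat \<Rightarrow> nat) \<Rightarrow> (nat \<Rightarrow> complex) \<Rightarrow> (nat \<Rightarrow> complex)" where
  "oracle_apply n W f v =
     (\<lambda>i. if i < qdim n W then
            (let a = i div W div 2^(2*n); b = i div W mod 2^(2*n); w = i mod W
             in v (enc n W a (Bit_Operations.xor b (f a)) w))
          else 0)"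

definition query :: "nat \<Rightarrow> nat \<Rightarrow> (nat \<Rightarrow> nat) \<Rightarrow> bool \<Rightarrow> (nat \<Rightarrow> complex) \<Rightarrow> (nat \<Rightarrow> complex)" where
  "query n W \<phi> s = oracle_apply n W (if s then \<phi> else inv_into {..<2^(2*n)} \<phi>)"

text \<open>Final state after U_0, query_1, U_1, ..., query_T, U_T applied to |0>.
(Internal randomness and intermediate measurements are purified into the workspace.)\<close>
fun run :: "nat \<Rightarrow> nat \<Rightarrow> (nat \<Rightarrow> nat \<Rightarrow> nat \<Rightarrow> complex) \<Rightarrow> (nat \<Rightarrow> bool)
            \<Rightarrow> (nat \<Rightarrow> nat) \<Rightarrow> nat \<Rightarrow> (nat \<Rightarrow> complex)" where
  "run n W U sel \<phi> 0 = mat_vec (qdim n W) (U 0) (\<lambda>i. if i = 0 then 1 else 0)"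
| "run n W U sel \<phi> (Suc t) =
     mat_vec (qdim n W) (U (Suc t)) (query n W \<phi> (sel (Suc t)) (run n W U sel \<phi> t))"

definition success_fixed :: "nat \<Rightarrow> nat \<Rightarrow> (nat \<Rightarrow> nat \<Rightarrow> nat \<Rightarrow> complex) \<Rightarrow> (nat \<Rightarrow> bool)
     \<Rightarrow> (nat \<Rightarrow> nat \<times> nat) \<Rightarrow> nat \<Rightarrow> (nat \<Rightarrow> nat) \<Rightarrow> real" where
  "success_fixed n W U sel out T \<phi> =
     (\<Sum>j\<in>{j. j < qdim n W \<and> out j \<in> zero_pairs n \<phi>}. (cmod (run n W U sel \<phi> T j))\<^sup>2)"

definition success_prob :: "nat \<Rightarrow> nat \<Rightarrow> nat \<Rightarrow> (nat \<Rightarrow> nat \<Rightarrow> nat \<Rightarrow> complex) \<Rightarrow> (nat \<Rightarrow> bool)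
     \<Rightarrow> (nat \<Rightarrow> nat \<times> nat) \<Rightarrow> nat \<Rightarrow> real" where
  "success_prob n K W U sel out T =
     (\<Sum>\<phi>\<in>perms_K n K. success_fixed n W U sel out T \<phi>) / real (card (perms_K n K))"

end

theory Submission
  imports Defs "Jordan_Normal_Form.Determinant" "HOL-Analysis.L2_Norm"
begin
lemma unitary_cols:
  assumes "unitary_mat D U" "k < D" "l < D"
  shows "(\<Sum>i<D. cnj (U i k) * U i l) = (if k = l then 1 else 0)"
proof -
  define A where "A = mat D D (\<lambda>(i,j). U i j)"
  define B where "B = mat D D (\<lambda>(i,j). cnj (U j i))"
  have A: "A \<in> carrier_mat D D" and B: "B \<in> carrier_mat D D" by (auto simp: A_def B_def)
  have "A * B = 1\<^sub>m D"
  proof (rule eq_matI)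
    fix i j assume ij: "i < dim_row (1\<^sub>m D)" "j < dim_col (1\<^sub>m D)"
    then have "(A * B) $$ (i,j) = (\<Sum>k<D. U i k * cnj (U j k))"
      by (auto simp: A_def B_def scalar_prod_def lessThan_atLeast0 intro!: sum.cong)
    also have "\<dots> = 1\<^sub>m D $$ (i,j)" using assms(1) ij by (auto simp: unitary_mat_def)
    finally show "(A * B) $$ (i,j) = 1\<^sub>m D $$ (i,j)" .
  qed (auto simp: A_def B_def)
  then have BA: "B * A = 1\<^sub>m D" using mat_mult_left_right_inverse[OF A B] by blast
  have "(\<Sum>i<D. cnj (U i k) * U i l) = (B * A) $$ (k,l)"
    using assms by (auto simp: A_def B_def scalar_prod_def lessThan_atLeast0 intro!: sum.cong)
  also have "\<dots> = (if k = l then 1 else 0)" using BA assms by simp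
  finally show ?thesis .
qed

definition sqn :: "nat \<Rightarrow> (nat \<Rightarrow> complex) \<Rightarrow> real" where
  "sqn D v = (\<Sum>i<D. (cmod (v i))\<^sup>2)"

lemma sqn_complex: "complex_of_real (sqn D v) = (\<Sum>i<D. v i * cnj (v i))"
  unfolding sqn_def of_real_sum by (intro sum.cong refl) (simp only: complex_norm_square)

lemma mat_vec_sqn:
  assumes U: "unitary_mat D U"
  shows "sqn D (mat_vec D U v) = sqn D v"
proof -
  have "complex_of_real (sqn D (mat_vec D U v)) =
     (\<Sum>i<D. (\<Sum>k<D. U i k * v k) * (\<Sum>l<D. cnj (U i l) * cnj (v l)))"
    by (simp add: sqn_complex mat_vec_def cnj_sum)
  also have "\<dots> = (\<Sum>i<D. \<Sum>k<D. \<Sum>l<D. v k * cnj (v l) * (cnj (U i l) * U i k))"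
    by (simp add: sum_product mult_ac)
  also have "\<dots> = (\<Sum>k<D. \<Sum>i<D. \<Sum>l<D. v k * cnj (v l) * (cnj (U i l) * U i k))"
    by (rule sum.swap)
  also have "\<dots> = (\<Sum>k<D. \<Sum>l<D. \<Sum>i<D. v k * cnj (v l) * (cnj (U i l) * U i k))"
    by (intro sum.cong refl sum.swap)
  also have "\<dots> = (\<Sum>k<D. \<Sum>l<D. v k * cnj (v l) * (\<Sum>i<D. cnj (U i l) * U i k))"
    by (simp add: sum_distrib_left)
  also have "\<dots> = (\<Sum>k<D. \<Sum>l<D. v k * cnj (v l) * (if l = k then 1 else 0))"
    by (intro sum.cong refl) (simp add: unitary_cols[OF U])
  also have "\<dots> = (\<Sum>k<D. v k * cnj (v k))"
    by (simp add: if_distrib cong: if_cong)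
  also have "\<dots> = complex_of_real (sqn D v)" by (simp add: sqn_complex)
  finally show ?thesis by (simp only: of_real_eq_iff)
qed

definition pix :: "nat \<Rightarrow> nat \<Rightarrow> (nat \<Rightarrow> nat) \<Rightarrow> nat \<Rightarrow> nat" where
  "pix n W f i = enc n W (i div W div 2^(2*n)) (xor (i div W mod 2^(2*n)) (f (i div W div 2^(2*n)))) (i mod W)"

definition adr :: "nat \<Rightarrow> nat \<Rightarrow> nat \<Rightarrow> nat" where
  "adr n W i = i div W div 2^(2*n)"

lemma enc_div: "w < W \<Longrightarrow> b < N \<Longrightarrow> N = 2^(2*n) \<Longrightarrow>
   enc n W a b w div W div N = a \<and> enc n W a b w div W mod N = b \<and> enc n W a b w mod W = w"
  by (auto simp: enc_def)

lemma enc_lt: "a < 2^(2*n) \<Longrightarrow> b < 2^(2*n) \<Longrightarrow> w < W \<Longrightarrow> enc n W a b w < qdim n W"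
proof -
  assume a: "a < 2^(2*n)" and b: "b < 2^(2*n)" and w: "w < W"
  have "a * 2^(2*n) + b < 2^(2*n) * 2^(2*n)"
  proof -
    have "a * 2^(2*n) + b < a * 2^(2*n) + 2^(2*n)" using b by simp
    also have "\<dots> = (a+1) * 2^(2*n)" by simp
    also have "\<dots> \<le> 2^(2*n) * 2^(2*n)" using a by (intro mult_right_mono) auto
    finally show ?thesis .
  qed
  then have "a * 2^(2*n) + b + 1 \<le> 2^(2*n) * 2^(2*n)" by simp
  then have "(a * 2^(2*n) + b + 1) * W \<le> 2^(2*n) * 2^(2*n) * W" by (rule mult_right_mono) simp
  then show ?thesis using w by (simp add: enc_def qdim_def algebra_simps)
qed

lemma decode_bounds:
  assumes "i < qdim n W" "0 < W"
  shows "i div W div 2^(2*n) < 2^(2*n)" "i div W mod 2^(2*n) < 2^(2*n)" "i mod W < W"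
    "enc n W (i div W div 2^(2*n)) (i div W mod 2^(2*n)) (i mod W) = i"
proof -
  have "i div W < 2^(2*n) * 2^(2*n)" using assms
    by (simp add: qdim_def less_mult_imp_div_less)
  then show "i div W div 2^(2*n) < 2^(2*n)" by (simp add: div_less_iff_less_mult)
  show "i div W mod 2^(2*n) < 2^(2*n)" by simp
  show "i mod W < W" using assms by simp
  show "enc n W (i div W div 2^(2*n)) (i div W mod 2^(2*n)) (i mod W) = i"
    unfolding enc_def by (metis div_mult_mod_eq)
qed

lemma xor_lt: "(b::nat) < 2^m \<Longrightarrow> c < 2^m \<Longrightarrow> xor b c < 2^m"
proof -
  assume "b < 2^m" "c < 2^m"
  then have "xor (int b) (int c) < 2^m" by (intro XOR_upper) auto
  moreover have "int (xor b c) = xor (int b) (int c)" by (rule of_nat_xor_eq)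
  ultimately show ?thesis by (metis of_nat_less_iff of_nat_numeral of_nat_power)
qed

lemma pix_props:
  assumes i: "i < qdim n W" and W: "0 < W" and f: "\<And>a. a < 2^(2*n) \<Longrightarrow> f a < 2^(2*n)"
  shows "pix n W f i < qdim n W" "adr n W (pix n W f i) = adr n W i" "pix n W f (pix n W f i) = i"
proof -
  note d = decode_bounds[OF i W]
  have x: "xor (i div W mod 2^(2*n)) (f (i div W div 2^(2*n))) < 2^(2*n)"
    using d f by (intro xor_lt) auto
  show "pix n W f i < qdim n W" unfolding pix_def using d x by (intro enc_lt) auto
  note e = enc_div[OF d(3) x refl]
  show "adr n W (pix n W f i) = adr n W i" using e by (simp add: pix_def adr_def)
  show "pix n W f (pix n W f i) = i" using e d
    by (simp add: pix_def xor.assoc)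
qed

lemma oracle_pix: "oracle_apply n W f v = (\<lambda>i. if i < qdim n W then v (pix n W f i) else 0)"
  unfolding oracle_apply_def pix_def Let_def by simp

lemma sum_pix:
  fixes h :: "nat \<Rightarrow> 'a::comm_monoid_add"
  assumes W: "0 < W" and f: "\<And>a. a < 2^(2*n) \<Longrightarrow> f a < 2^(2*n)"
  shows "(\<Sum>i<qdim n W. h (pix n W f i)) = (\<Sum>i<qdim n W. h i)"
  by (rule sum.reindex_bij_witness[where i="pix n W f" and j="pix n W f"])
     (auto simp: pix_props[OF _ W f])

lemma oracle_sqn:
  assumes W: "0 < W" and f: "\<And>a. a < 2^(2*n) \<Longrightarrow> f a < 2^(2*n)"
  shows "sqn (qdim n W) (oracle_apply n W f v) = sqn (qdim n W) v"
  unfolding sqn_def oracle_pix using sum_pix[OF W f, where h="\<lambda>i. (cmod (v i))\<^sup>2"] by simp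

lemma oracle_diff: "oracle_apply n W f (\<lambda>i. v i - w i) = (\<lambda>i. oracle_apply n W f v i - oracle_apply n W f w i)"
  by (simp add: oracle_pix fun_eq_iff)

lemma sq_diff_le: "(cmod (a - b))\<^sup>2 \<le> 2 * (cmod a)\<^sup>2 + 2 * (cmod b)\<^sup>2"
proof -
  have "cmod (a - b) \<le> cmod a + cmod b" by (rule norm_triangle_ineq4)
  then have "(cmod (a - b))\<^sup>2 \<le> (cmod a + cmod b)\<^sup>2" by (intro power_mono) auto
  also have "\<dots> \<le> 2 * (cmod a)\<^sup>2 + 2 * (cmod b)\<^sup>2"
  proof -
    have "0 \<le> (cmod a - cmod b)\<^sup>2" by simp
    moreover have "(cmod a + cmod b)\<^sup>2 = 2 * (cmod a)\<^sup>2 + 2 * (cmod b)\<^sup>2 - (cmod a - cmod b)\<^sup>2"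
      by (simp add: power2_eq_square algebra_simps)
    ultimately show ?thesis by linarith
  qed
  finally show ?thesis .
qed

lemma oracle_two:
  assumes W: "0 < W" and f: "\<And>a. a < 2^(2*n) \<Longrightarrow> f a < 2^(2*n)"
    and g: "\<And>a. a < 2^(2*n) \<Longrightarrow> g a < 2^(2*n)"
  shows "sqn (qdim n W) (\<lambda>i. oracle_apply n W f v i - oracle_apply n W g v i)
     \<le> 4 * (\<Sum>i<qdim n W. if f (adr n W i) \<noteq> g (adr n W i) then (cmod (v i))\<^sup>2 else 0)"
proof -
  define D where "D = qdim n W"
  define h where "h = (\<lambda>i. if f (adr n W i) \<noteq> g (adr n W i) then (cmod (v i))\<^sup>2 else 0)"
  have "sqn D (\<lambda>i. oracle_apply n W f v i - oracle_apply n W g v i)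
      = (\<Sum>i<D. (cmod (v (pix n W f i) - v (pix n W g i)))\<^sup>2)"
    by (simp add: sqn_def oracle_pix D_def)
  also have "\<dots> \<le> (\<Sum>i<D. 2 * h (pix n W f i) + 2 * h (pix n W g i))"
  proof (rule sum_mono)
    fix i assume i: "i \<in> {..<D}"
    then have i': "i < qdim n W" by (simp add: D_def)
    show "(cmod (v (pix n W f i) - v (pix n W g i)))\<^sup>2 \<le> 2 * h (pix n W f i) + 2 * h (pix n W g i)"
    proof (cases "f (adr n W i) \<noteq> g (adr n W i)")
      case True
      then show ?thesis using sq_diff_le pix_props(2)[OF i' W f] pix_props(2)[OF i' W g]
        by (simp add: h_def)
    next
      case False
      then have "pix n W f i = pix n W g i" by (simp add: pix_def adr_def)
      then show ?thesis by (simp add: h_def)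
    qed
  qed
  also have "\<dots> = 2 * (\<Sum>i<D. h (pix n W f i)) + 2 * (\<Sum>i<D. h (pix n W g i))"
    by (simp add: sum.distrib sum_distrib_left)
  also have "\<dots> = 4 * (\<Sum>i<D. h i)" using sum_pix[OF W f, where h=h] sum_pix[OF W g, where h=h]
    by (simp add: D_def)
  finally show ?thesis by (simp add: D_def h_def)
qed

definition Fq :: "nat \<Rightarrow> (nat \<Rightarrow> nat) \<Rightarrow> bool \<Rightarrow> nat \<Rightarrow> nat" where
  "Fq n \<psi> s = (if s then \<psi> else inv_into {..<2^(2*n)} \<psi>)"

lemma query_Fq: "query n W \<psi> s = oracle_apply n W (Fq n \<psi> s)"
  by (simp add: query_def Fq_def)

lemma Fq_lt: assumes "\<psi> permutes {..<(2::nat)^(2*n)}" "a < 2^(2*n)" shows "Fq n \<psi> s a < 2^(2*n)"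
proof (cases s)
  case True then show ?thesis using assms permutes_in_image[of \<psi> "{..<2^(2*n)}" a] by (simp add: Fq_def)
next
  case False
  have "a \<in> \<psi> ` {..<2^(2*n)}" using assms permutes_image[OF assms(1)] by simp
  then have "inv_into {..<2^(2*n)} \<psi> a \<in> {..<2^(2*n)}" by (rule inv_into_into)
  then show ?thesis using False by (simp add: Fq_def)
qed

lemma mat_vec_diff: "mat_vec D U v i - mat_vec D U w i = mat_vec D U (\<lambda>k. v k - w k) i"
  by (simp add: mat_vec_def sum_subtractf right_diff_distrib)

lemma sqrt_sqn_L2: "sqrt (sqn D v) = L2_set (\<lambda>i. cmod (v i)) {..<D}"
  by (simp add: L2_set_def sqn_def)

lemma nrm_triangle: "sqrt (sqn D (\<lambda>i. v i + w i)) \<le> sqrt (sqn D v) + sqrt (sqn D w)"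
proof -
  have "L2_set (\<lambda>i. cmod (v i + w i)) {..<D} \<le> L2_set (\<lambda>i. cmod (v i) + cmod (w i)) {..<D}"
    by (rule L2_set_mono) (auto simp: norm_triangle_ineq)
  also have "\<dots> \<le> L2_set (\<lambda>i. cmod (v i)) {..<D} + L2_set (\<lambda>i. cmod (w i)) {..<D}"
    by (rule L2_set_triangle_ineq)
  finally show ?thesis by (simp add: sqrt_sqn_L2)
qed

lemma sqn_nonneg: "0 \<le> sqn D v" by (simp add: sqn_def sum_nonneg)

lemma qdim_pos: "0 < W \<Longrightarrow> 0 < qdim n W" by (simp add: qdim_def)

lemma run_sqn:
  assumes W: "0 < W" and P: "\<psi> permutes {..<(2::nat)^(2*n)}"
    and U: "\<And>t. t \<le> T \<Longrightarrow> unitary_mat (qdim n W) (U t)"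
  shows "t \<le> T \<Longrightarrow> sqn (qdim n W) (run n W U sel \<psi> t) = 1"
proof (induction t)
  case 0
  have "sqn (qdim n W) (run n W U sel \<psi> 0) = sqn (qdim n W) (\<lambda>i. if i = 0 then 1 else 0)"
    using U[of 0] by (simp add: mat_vec_sqn)
  also have "\<dots> = (\<Sum>i<qdim n W. if i = 0 then 1 else 0)"
    unfolding sqn_def by (intro sum.cong refl) auto
  also have "\<dots> = 1" using qdim_pos[OF W, of n] by simp
  finally show ?case .
next
  case (Suc t)
  then show ?case using U[of "Suc t"]
    by (simp add: mat_vec_sqn query_Fq oracle_sqn[OF W Fq_lt[OF P]])
qed

definition mbad :: "nat \<Rightarrow> nat \<Rightarrow> (nat \<Rightarrow> nat \<Rightarrow> nat \<Rightarrow> complex) \<Rightarrow> (nat \<Rightarrow> bool)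
   \<Rightarrow> (nat \<Rightarrow> nat) \<Rightarrow> (nat \<Rightarrow> nat) \<Rightarrow> nat \<Rightarrow> real" where
  "mbad n W U sel \<psi> \<psi>' s = (\<Sum>i<qdim n W. if Fq n \<psi> (sel (Suc s)) (adr n W i) \<noteq> Fq n \<psi>' (sel (Suc s)) (adr n W i)
       then (cmod (run n W U sel \<psi>' s i))\<^sup>2 else 0)"

lemma hybrid_dist:
  assumes W: "0 < W" and P: "\<psi> permutes {..<(2::nat)^(2*n)}" and P': "\<psi>' permutes {..<(2::nat)^(2*n)}"
    and U: "\<And>t. t \<le> T \<Longrightarrow> unitary_mat (qdim n W) (U t)"
  shows "t \<le> T \<Longrightarrow> sqrt (sqn (qdim n W) (\<lambda>i. run n W U sel \<psi> t i - run n W U sel \<psi>' t i))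
     \<le> (\<Sum>s<t. 2 * sqrt (mbad n W U sel \<psi> \<psi>' s))"
proof (induction t)
  case 0
  show ?case by (simp add: mat_vec_diff[symmetric] sqn_def)
next
  case (Suc t)
  define D where "D = qdim n W"
  define r where "r = run n W U sel \<psi> t"
  define r' where "r' = run n W U sel \<psi>' t"
  define f where "f = Fq n \<psi> (sel (Suc t))"
  define g where "g = Fq n \<psi>' (sel (Suc t))"
  have f: "\<And>a. a < 2^(2*n) \<Longrightarrow> f a < 2^(2*n)" using Fq_lt[OF P] by (simp add: f_def)
  have g: "\<And>a. a < 2^(2*n) \<Longrightarrow> g a < 2^(2*n)" using Fq_lt[OF P'] by (simp add: g_def)
  have IH: "sqrt (sqn D (\<lambda>i. r i - r' i)) \<le> (\<Sum>s<t. 2 * sqrt (mbad n W U sel \<psi> \<psi>' s))"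
    using Suc by (simp add: D_def r_def r'_def)
  have "sqn D (\<lambda>i. run n W U sel \<psi> (Suc t) i - run n W U sel \<psi>' (Suc t) i)
     = sqn D (\<lambda>i. oracle_apply n W f r i - oracle_apply n W g r' i)"
    using U[of "Suc t"] Suc.prems
    by (simp add: mat_vec_diff mat_vec_sqn D_def r_def r'_def f_def g_def query_Fq)
  also have "(\<lambda>i. oracle_apply n W f r i - oracle_apply n W g r' i)
     = (\<lambda>i. oracle_apply n W f (\<lambda>i. r i - r' i) i + (oracle_apply n W f r' i - oracle_apply n W g r' i))"
    by (simp add: oracle_diff fun_eq_iff)
  finally have "sqrt (sqn D (\<lambda>i. run n W U sel \<psi> (Suc t) i - run n W U sel \<psi>' (Suc t) i))
     \<le> sqrt (sqn D (oracle_apply n W f (\<lambda>i. r i - r' i))) + sqrt (sqn D (\<lambda>i. oracle_apply n W f r' i - oracle_apply n W g r' i))"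
    using nrm_triangle by simp
  also have "sqn D (oracle_apply n W f (\<lambda>i. r i - r' i)) = sqn D (\<lambda>i. r i - r' i)"
    unfolding D_def by (rule oracle_sqn[where f=f, OF W f])
  also have "sqrt (sqn D (\<lambda>i. oracle_apply n W f r' i - oracle_apply n W g r' i))
     \<le> sqrt (4 * mbad n W U sel \<psi> \<psi>' t)"
  proof -
    have "sqn D (\<lambda>i. oracle_apply n W f r' i - oracle_apply n W g r' i) \<le> 4 * mbad n W U sel \<psi> \<psi>' t"
      unfolding D_def mbad_def r'_def f_def g_def
      by (rule oracle_two[OF W Fq_lt[OF P] Fq_lt[OF P']])
    then show ?thesis by (rule real_sqrt_le_mono)
  qed
  also have "sqrt (4 * mbad n W U sel \<psi> \<psi>' t) = 2 * sqrt (mbad n W U sel \<psi> \<psi>' t)"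
    by (simp add: real_sqrt_mult)
  finally show ?case using IH by (simp add: D_def)
qed

lemma cs_sum: fixes a :: "nat \<Rightarrow> real" shows "(\<Sum>s<T. a s)\<^sup>2 \<le> real T * (\<Sum>s<T. (a s)\<^sup>2)"
proof (induction T)
  case 0 then show ?case by simp
next
  case (Suc T)
  have "(\<Sum>s<T. 2 * a s * a T) \<le> (\<Sum>s<T. (a s)\<^sup>2 + (a T)\<^sup>2)"
  proof (rule sum_mono)
    fix s
    have "0 \<le> (a s - a T)\<^sup>2" by simp
    then show "2 * a s * a T \<le> (a s)\<^sup>2 + (a T)\<^sup>2" by (simp add: power2_eq_square algebra_simps)
  qed
  then have h: "2 * (\<Sum>s<T. a s) * a T \<le> (\<Sum>s<T. (a s)\<^sup>2) + real T * (a T)\<^sup>2"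
    by (simp add: sum.distrib sum_distrib_right sum_distrib_left mult_ac)
  have "(\<Sum>s<Suc T. a s)\<^sup>2 = (\<Sum>s<T. a s)\<^sup>2 + 2 * (\<Sum>s<T. a s) * a T + (a T)\<^sup>2"
    by (simp add: power2_eq_square algebra_simps)
  also have "\<dots> \<le> real T * (\<Sum>s<T. (a s)\<^sup>2) + ((\<Sum>s<T. (a s)\<^sup>2) + real T * (a T)\<^sup>2) + (a T)\<^sup>2"
    using Suc h by linarith
  also have "\<dots> = real (Suc T) * (\<Sum>s<Suc T. (a s)\<^sup>2)" by (simp add: algebra_simps)
  finally show ?case .
qed

lemma succ_bound:
  assumes W: "0 < W" and P: "\<psi> permutes {..<(2::nat)^(2*n)}" and P': "\<psi>' permutes {..<(2::nat)^(2*n)}"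
    and U: "\<And>t. t \<le> T \<Longrightarrow> unitary_mat (qdim n W) (U t)"
  shows "success_fixed n W U sel out T \<psi> \<le> 8 * real T * (\<Sum>s<T. mbad n W U sel \<psi> \<psi>' s)
     + 2 * (\<Sum>j\<in>{j. j < qdim n W \<and> out j \<in> zero_pairs n \<psi>}. (cmod (run n W U sel \<psi>' T j))\<^sup>2)"
proof -
  define D where "D = qdim n W"
  define G where "G = {j. j < qdim n W \<and> out j \<in> zero_pairs n \<psi>}"
  define r where "r = run n W U sel \<psi> T"
  define r' where "r' = run n W U sel \<psi>' T"
  have GD: "G \<subseteq> {..<D}" by (auto simp: G_def D_def)
  have "success_fixed n W U sel out T \<psi> = (\<Sum>j\<in>G. (cmod (r j))\<^sup>2)"
    by (simp add: success_fixed_def G_def r_def)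
  also have "\<dots> \<le> (\<Sum>j\<in>G. 2 * (cmod (r j - r' j))\<^sup>2 + 2 * (cmod (r' j))\<^sup>2)"
    by (rule sum_mono) (use sq_diff_le[of "r j - r' j" "- r' j" for j] in simp)
  also have "\<dots> = 2 * (\<Sum>j\<in>G. (cmod (r j - r' j))\<^sup>2) + 2 * (\<Sum>j\<in>G. (cmod (r' j))\<^sup>2)"
    by (simp add: sum.distrib sum_distrib_left)
  also have "(\<Sum>j\<in>G. (cmod (r j - r' j))\<^sup>2) \<le> sqn D (\<lambda>i. r i - r' i)"
    unfolding sqn_def using GD by (intro sum_mono2) auto
  also have "sqn D (\<lambda>i. r i - r' i) = (sqrt (sqn D (\<lambda>i. r i - r' i)))\<^sup>2"
    using sqn_nonneg by simp
  also have "\<dots> \<le> (\<Sum>s<T. 2 * sqrt (mbad n W U sel \<psi> \<psi>' s))\<^sup>2"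
    using hybrid_dist[where U=U and T=T and t=T and sel=sel, OF W P P' U] by (intro power_mono) (auto simp: D_def r_def r'_def sqn_nonneg)
  also have "\<dots> \<le> real T * (\<Sum>s<T. (2 * sqrt (mbad n W U sel \<psi> \<psi>' s))\<^sup>2)"
    by (rule cs_sum)
  also have "(\<Sum>s<T. (2 * sqrt (mbad n W U sel \<psi> \<psi>' s))\<^sup>2) = 4 * (\<Sum>s<T. mbad n W U sel \<psi> \<psi>' s)"
    by (simp add: power_mult_distrib sum_distrib_left mbad_def sum_nonneg)
  finally show ?thesis by (simp add: G_def r'_def)
qed

lemma inv_into_perm: "p permutes S \<Longrightarrow> a \<in> S \<Longrightarrow> inv_into S p a = inv_into UNIV p a"
  by (metis permutes_inverses(1) permutes_inv_eq inv_into_f_eq permutes_inj permutes_in_image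
      permutes_inv inj_on_subset subset_UNIV)

lemma sum_count:
  fixes w :: "nat \<Rightarrow> real" and M D K :: nat
  assumes w: "\<And>i. 0 \<le> w i" and c: "\<And>i. i < D \<Longrightarrow> card {k\<in>{..<M}. P k i} \<le> K"
  shows "(\<Sum>k<M. \<Sum>i<D. if P k i then w i else 0) \<le> real K * (\<Sum>i<D. w i)"
proof -
  have "(\<Sum>k<M. \<Sum>i<D. if P k i then w i else 0) = (\<Sum>i<D. \<Sum>k<M. if P k i then w i else 0)"
    by (rule sum.swap)
  also have "\<dots> = (\<Sum>i<D. real (card {k\<in>{..<M}. P k i}) * w i)"
  proof (intro sum.cong refl)
    fix i
    have "(\<Sum>k<M. if P k i then w i else 0) = (\<Sum>k\<in>{k\<in>{..<M}. P k i}. w i)"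
      by (rule sum.inter_filter[symmetric]) (rule finite_lessThan)
    then show "(\<Sum>k<M. if P k i then w i else 0) = real (card {k\<in>{..<M}. P k i}) * w i" by simp
  qed
  also have "\<dots> \<le> (\<Sum>i<D. real K * w i)"
    using c w by (intro sum_mono mult_right_mono) auto
  finally show ?thesis by (simp add: sum_distrib_left)
qed

lemma per_g:
  fixes M K :: nat
  assumes W: "0 < W" and U: "\<And>t. t \<le> T \<Longrightarrow> unitary_mat (qdim n W) (U t)"
    and P': "\<psi>' permutes {..<(2::nat)^(2*n)}"
    and P: "\<And>k. k < M \<Longrightarrow> \<psi> k permutes {..<(2::nat)^(2*n)}"
    and fwd: "\<And>a. card {k\<in>{..<M}. \<psi> k a \<noteq> \<psi>' a} \<le> K"
    and zpc: "\<And>j. card {k\<in>{..<M}. out j \<in> zero_pairs n (\<psi> k)} \<le> K"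
  shows "(\<Sum>k<M. success_fixed n W U sel out T (\<psi> k)) \<le> (8 * real T ^ 2 + 2) * real K"
proof -
  define D where "D = qdim n W"
  define r' where "r' = run n W U sel \<psi>' "
  have nrm: "\<And>s. s \<le> T \<Longrightarrow> (\<Sum>i<D. (cmod (r' s i))\<^sup>2) = 1"
    using run_sqn[OF W P' U] by (simp add: sqn_def D_def r'_def)
  have badc: "card {k\<in>{..<M}. Fq n (\<psi> k) b a \<noteq> Fq n \<psi>' b a} \<le> K" if a: "a < 2^(2*n)" for a b
  proof (cases b)
    case True then show ?thesis using fwd[of a] by (simp add: Fq_def)
  next
    case False
    define a' where "a' = inv_into UNIV \<psi>' a"
    have sub: "{k\<in>{..<M}. Fq n (\<psi> k) b a \<noteq> Fq n \<psi>' b a} \<subseteq> {k\<in>{..<M}. \<psi> k a' \<noteq> \<psi>' a'}"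
    proof safe
      fix k assume k: "k < M" and ne: "Fq n (\<psi> k) b a \<noteq> Fq n \<psi>' b a" and eq: "\<psi> k a' = \<psi>' a'"
      have "\<psi>' a' = a" using P' by (simp add: a'_def permutes_inverses(1))
      then have "inv_into UNIV (\<psi> k) a = a'" using eq P[OF k] by (metis permutes_inverses(2))
      then show False using ne False a P[OF k] P' by (simp add: Fq_def inv_into_perm a'_def)
    qed
    have "card {k\<in>{..<M}. Fq n (\<psi> k) b a \<noteq> Fq n \<psi>' b a} \<le> card {k\<in>{..<M}. \<psi> k a' \<noteq> \<psi>' a'}"
      by (rule card_mono[OF _ sub]) (rule finite_subset[OF _ finite_lessThan[of M]], auto)
    then show ?thesis using fwd[of a'] by (rule le_trans)
  qed
  have "(\<Sum>k<M. success_fixed n W U sel out T (\<psi> k)) \<le>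
     (\<Sum>k<M. 8 * real T * (\<Sum>s<T. mbad n W U sel (\<psi> k) \<psi>' s)
       + 2 * (\<Sum>j\<in>{j. j < qdim n W \<and> out j \<in> zero_pairs n (\<psi> k)}. (cmod (run n W U sel \<psi>' T j))\<^sup>2))"
    by (intro sum_mono succ_bound[OF W P _ U] P') auto
  also have "\<dots> = 8 * real T * (\<Sum>s<T. \<Sum>k<M. mbad n W U sel (\<psi> k) \<psi>' s)
      + 2 * (\<Sum>k<M. \<Sum>j<D. if out j \<in> zero_pairs n (\<psi> k) then (cmod (r' T j))\<^sup>2 else 0)"
  proof -
    have pk: "(\<Sum>j\<in>{j. j < qdim n W \<and> out j \<in> zero_pairs n (\<psi> k)}. (cmod (run n W U sel \<psi>' T j))\<^sup>2)
       = (\<Sum>j<D. if out j \<in> zero_pairs n (\<psi> k) then (cmod (r' T j))\<^sup>2 else 0)" for k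
    proof -
      have "{j. j < qdim n W \<and> out j \<in> zero_pairs n (\<psi> k)} = {j\<in>{..<D}. out j \<in> zero_pairs n (\<psi> k)}"
        by (auto simp: D_def)
      then show ?thesis by (simp only: sum.inter_filter[OF finite_lessThan] r'_def)
    qed
    have s1: "(\<Sum>k<M. 8 * real T * (\<Sum>s<T. mbad n W U sel (\<psi> k) \<psi>' s))
        = 8 * real T * (\<Sum>s<T. \<Sum>k<M. mbad n W U sel (\<psi> k) \<psi>' s)"
      by (subst sum_distrib_left[symmetric]) (rule arg_cong[OF sum.swap])
    have s2: "(\<Sum>k<M. 2 * (\<Sum>j<D. if out j \<in> zero_pairs n (\<psi> k) then (cmod (r' T j))\<^sup>2 else 0))
       = 2 * (\<Sum>k<M. \<Sum>j<D. if out j \<in> zero_pairs n (\<psi> k) then (cmod (r' T j))\<^sup>2 else 0)"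
      by (rule sum_distrib_left[symmetric])
    show ?thesis unfolding pk sum.distrib s1 s2 by (rule refl)
  qed
  also have "(\<Sum>s<T. \<Sum>k<M. mbad n W U sel (\<psi> k) \<psi>' s) \<le> (\<Sum>s<T. real K)"
  proof (rule sum_mono)
    fix s assume s: "s \<in> {..<T}"
    have "(\<Sum>k<M. mbad n W U sel (\<psi> k) \<psi>' s) \<le> real K * (\<Sum>i<D. (cmod (r' s i))\<^sup>2)"
      unfolding mbad_def D_def[symmetric] r'_def[symmetric]
    proof (rule sum_count)
      fix i assume "i < D"
      then have "adr n W i < 2^(2*n)" using decode_bounds(1)[of i n W] W by (simp add: D_def adr_def)
      then show "card {k \<in> {..<M}. Fq n (\<psi> k) (sel (Suc s)) (adr n W i) \<noteq> Fq n \<psi>' (sel (Suc s)) (adr n W i)} \<le> K"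
        by (rule badc)
    qed simp
    then show "(\<Sum>k<M. mbad n W U sel (\<psi> k) \<psi>' s) \<le> real K" using nrm[of s] s by simp
  qed
  also have "(\<Sum>k<M. \<Sum>j<D. if out j \<in> zero_pairs n (\<psi> k) then (cmod (r' T j))\<^sup>2 else 0)
     \<le> real K * (\<Sum>j<D. (cmod (r' T j))\<^sup>2)"
    by (rule sum_count[OF _ zpc]) simp
  finally have fin: "(\<Sum>k<M. success_fixed n W U sel out T (\<psi> k))
      \<le> 8 * real T * (\<Sum>s<T. real K) + 2 * (real K * (\<Sum>j<D. (cmod (r' T j))\<^sup>2))"
    by (simp add: mult_left_mono)
  then show ?thesis using nrm[of T] by (simp add: power2_eq_square algebra_simps)
qed

definition Xs :: "nat \<Rightarrow> nat set" where "Xs n = (\<lambda>x. x * 2^n) ` {..<2^n}"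

definition Gs :: "nat \<Rightarrow> ((nat \<Rightarrow> nat) \<times> (nat \<Rightarrow> nat)) set" where
  "Gs n = {(\<alpha>,\<beta>). \<alpha> permutes {..<2^(2*n)} \<and> \<alpha> ` Xs n = Xs n \<and> \<beta> permutes {..<2^(2*n)} \<and> \<beta> ` Xs n = Xs n}"

definition act :: "(nat \<Rightarrow> nat) \<times> (nat \<Rightarrow> nat) \<Rightarrow> (nat \<Rightarrow> nat) \<Rightarrow> (nat \<Rightarrow> nat)" where
  "act g \<phi> = snd g \<circ> \<phi> \<circ> fst g"

definition gcomp :: "(nat \<Rightarrow> nat) \<times> (nat \<Rightarrow> nat) \<Rightarrow> (nat \<Rightarrow> nat) \<times> (nat \<Rightarrow> nat) \<Rightarrow> (nat \<Rightarrow> nat) \<times> (nat \<Rightarrow> nat)" where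
  "gcomp g c = (fst c \<circ> fst g, snd g \<circ> snd c)"

definition ginv :: "(nat \<Rightarrow> nat) \<times> (nat \<Rightarrow> nat) \<Rightarrow> (nat \<Rightarrow> nat) \<times> (nat \<Rightarrow> nat)" where
  "ginv g = (inv_into UNIV (fst g), inv_into UNIV (snd g))"

lemma pow2n: "(2::nat)^(2*n) = 2^n * 2^n"
  by (simp add: power_mult_distrib mult_2 power_add)

lemma Xs_sub: "Xs n \<subseteq> {..<2^(2*n)}"
proof
  fix a assume "a \<in> Xs n"
  then obtain x where x: "x < 2^n" "a = x * 2^n" by (auto simp: Xs_def)
  have "x * 2^n < 2^n * 2^n" using x(1) by simp
  then show "a \<in> {..<2^(2*n)}" using x by (simp add: pow2n)
qed

lemma card_Xs: "card (Xs n) = 2^n"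
  unfolding Xs_def by (subst card_image) (auto simp: inj_on_def)

lemma card_zp: "card (zero_pairs n \<phi>) = card {a\<in>Xs n. \<phi> a \<in> Xs n}"
proof -
  have "bij_betw (\<lambda>(x,y). x * 2^n) (zero_pairs n \<phi>) {a\<in>Xs n. \<phi> a \<in> Xs n}"
    unfolding bij_betw_def
  proof
    show "inj_on (\<lambda>(x,y). x * 2^n) (zero_pairs n \<phi>)"
      by (auto simp: inj_on_def zero_pairs_def)
    show "(\<lambda>(x,y). x * 2^n) ` zero_pairs n \<phi> = {a\<in>Xs n. \<phi> a \<in> Xs n}"
      by (auto simp: zero_pairs_def Xs_def image_iff)
  qed
  then show ?thesis by (rule bij_betw_same_card)
qed

lemma perm_X_iff: "\<beta> permutes S \<Longrightarrow> \<beta> ` X = X \<Longrightarrow> (\<beta> y \<in> X \<longleftrightarrow> y \<in> X)"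
  by (metis permutes_inj inj_image_mem_iff)

lemma act_PK:
  assumes g: "g \<in> Gs n" and \<phi>: "\<phi> \<in> perms_K n K"
  shows "act g \<phi> \<in> perms_K n K"
proof -
  obtain \<alpha> \<beta> where gab: "g = (\<alpha>, \<beta>)" by (cases g)
  have a: "\<alpha> permutes {..<2^(2*n)}" "\<alpha> ` Xs n = Xs n" and b: "\<beta> permutes {..<2^(2*n)}" "\<beta> ` Xs n = Xs n"
    using g by (auto simp: Gs_def gab)
  have p: "\<phi> permutes {..<2^(2*n)}" and c: "card (zero_pairs n \<phi>) = K"
    using \<phi> by (auto simp: perms_K_def is_perm_def)
  have gp: "act g \<phi> permutes {..<2^(2*n)}"
    unfolding act_def gab by (auto intro!: permutes_compose a b p)
  have e1: "{a\<in>Xs n. act g \<phi> a \<in> Xs n} = {a\<in>Xs n. \<phi> (\<alpha> a) \<in> Xs n}"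
    using perm_X_iff[OF b] by (auto simp: act_def gab)
  have e2: "\<alpha> ` {a\<in>Xs n. \<phi> (\<alpha> a) \<in> Xs n} = {b\<in>Xs n. \<phi> b \<in> Xs n}"
  proof
    show "\<alpha> ` {a\<in>Xs n. \<phi> (\<alpha> a) \<in> Xs n} \<subseteq> {b\<in>Xs n. \<phi> b \<in> Xs n}" using a(2) by auto
    show "{b\<in>Xs n. \<phi> b \<in> Xs n} \<subseteq> \<alpha> ` {a\<in>Xs n. \<phi> (\<alpha> a) \<in> Xs n}"
    proof
      fix b assume "b \<in> {b\<in>Xs n. \<phi> b \<in> Xs n}"
      then obtain a where "a \<in> Xs n" "b = \<alpha> a" "\<phi> b \<in> Xs n" using a(2) by blast
      then show "b \<in> \<alpha> ` {a\<in>Xs n. \<phi> (\<alpha> a) \<in> Xs n}" by auto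
    qed
  qed
  have "inj \<alpha>" using a(1) by (rule permutes_inj)
  then have "inj_on \<alpha> {a\<in>Xs n. \<phi> (\<alpha> a) \<in> Xs n}" by (rule inj_on_subset) simp
  then have "card (\<alpha> ` {a\<in>Xs n. \<phi> (\<alpha> a) \<in> Xs n}) = card {a\<in>Xs n. \<phi> (\<alpha> a) \<in> Xs n}"
    by (rule card_image)
  then have "card {a\<in>Xs n. act g \<phi> a \<in> Xs n} = card {b\<in>Xs n. \<phi> b \<in> Xs n}"
    using e1 e2 by simp
  then have "card (zero_pairs n (act g \<phi>)) = K" using c by (simp add: card_zp)
  with gp show ?thesis by (simp add: perms_K_def is_perm_def)
qed

lemma inv_image_eq: "p permutes S \<Longrightarrow> p ` X = X \<Longrightarrow> inv_into UNIV p ` X = X"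
  by (metis image_inv_f_f permutes_inj)

lemma ginv_G: assumes "g \<in> Gs n" shows "ginv g \<in> Gs n"
proof -
  obtain \<alpha> \<beta> where gab: "g = (\<alpha>, \<beta>)" by (cases g)
  have a: "\<alpha> permutes {..<2^(2*n)}" "\<alpha> ` Xs n = Xs n" and b: "\<beta> permutes {..<2^(2*n)}" "\<beta> ` Xs n = Xs n"
    using assms by (auto simp: Gs_def gab)
  show ?thesis unfolding Gs_def ginv_def gab
    using permutes_inv[OF a(1)] permutes_inv[OF b(1)] inv_image_eq[OF a] inv_image_eq[OF b] by simp
qed

lemma act_ginv:
  assumes "g \<in> Gs n"
  shows "act g (act (ginv g) \<phi>) = \<phi>" "act (ginv g) (act g \<phi>) = \<phi>"
proof -
  obtain \<alpha> \<beta> where gab: "g = (\<alpha>, \<beta>)" by (cases g)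
  have a: "\<alpha> permutes {..<2^(2*n)}" and b: "\<beta> permutes {..<2^(2*n)}"
    using assms by (auto simp: Gs_def gab)
  show "act g (act (ginv g) \<phi>) = \<phi>"
    by (simp add: act_def ginv_def gab fun_eq_iff permutes_inverses[OF a] permutes_inverses[OF b])
  show "act (ginv g) (act g \<phi>) = \<phi>"
    by (simp add: act_def ginv_def gab fun_eq_iff permutes_inverses[OF a] permutes_inverses[OF b])
qed

lemma sum_act:
  assumes "g \<in> Gs n"
  shows "(\<Sum>\<phi>\<in>perms_K n K. h (act g \<phi>)) = (\<Sum>\<phi>\<in>perms_K n K. (h \<phi>::real))"
  by (rule sum.reindex_bij_witness[where i="act (ginv g)" and j="act g"])
     (auto simp: act_ginv[OF assms] act_PK[OF assms] act_PK[OF ginv_G[OF assms]])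

lemma gcomp_G: assumes "g \<in> Gs n" "c \<in> Gs n" shows "gcomp g c \<in> Gs n"
proof -
  obtain a b where gab: "g = (a, b)" by (cases g)
  obtain a' b' where cab: "c = (a', b')" by (cases c)
  have A: "a permutes {..<2^(2*n)}" "a ` Xs n = Xs n" "b permutes {..<2^(2*n)}" "b ` Xs n = Xs n"
    using assms(1) by (simp_all add: Gs_def gab)
  have B: "a' permutes {..<2^(2*n)}" "a' ` Xs n = Xs n" "b' permutes {..<2^(2*n)}" "b' ` Xs n = Xs n"
    using assms(2) by (simp_all add: Gs_def cab)
  have h: "(f \<circ> g) ` Xs n = Xs n" if "f ` Xs n = Xs n" "g ` Xs n = Xs n" for f g :: "nat \<Rightarrow> nat"
    using that by (metis image_comp)
  have 1: "a' \<circ> a permutes {..<2^(2*n)}" by (rule permutes_compose[OF A(1) B(1)])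
  have 2: "b \<circ> b' permutes {..<2^(2*n)}" by (rule permutes_compose[OF B(3) A(3)])
  have 3: "(a' \<circ> a) ` Xs n = Xs n" by (rule h[OF B(2) A(2)])
  have 4: "(b \<circ> b') ` Xs n = Xs n" by (rule h[OF A(4) B(4)])
  show ?thesis unfolding Gs_def gcomp_def gab cab using 1 2 3 4 by simp
qed

lemma act_gcomp: "act (gcomp g c) \<phi> = act g (act c \<phi>)"
  by (simp add: act_def gcomp_def comp_assoc)

lemma gcomp_ginv:
  assumes "c \<in> Gs n"
  shows "gcomp (gcomp g c) (ginv c) = g" "gcomp (gcomp g (ginv c)) c = g"
proof -
  obtain \<alpha> \<beta> where gab: "c = (\<alpha>, \<beta>)" by (cases c)
  have a: "\<alpha> permutes {..<2^(2*n)}" and b: "\<beta> permutes {..<2^(2*n)}"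
    using assms by (auto simp: Gs_def gab)
  show "gcomp (gcomp g c) (ginv c) = g" "gcomp (gcomp g (ginv c)) c = g"
    by (auto simp: gcomp_def ginv_def gab fun_eq_iff permutes_inverses[OF a] permutes_inverses[OF b] prod_eq_iff)
qed

lemma sum_gcomp:
  assumes "c \<in> Gs n"
  shows "(\<Sum>g\<in>Gs n. h (gcomp g c)) = (\<Sum>g\<in>Gs n. (h g::real))"
  by (rule sum.reindex_bij_witness[where i="\<lambda>g. gcomp g (ginv c)" and j="\<lambda>g. gcomp g c"])
     (auto simp: gcomp_ginv[OF assms] gcomp_G[OF _ assms] gcomp_G[OF _ ginv_G[OF assms]])

lemma finite_Gs: "finite (Gs n)"
proof -
  have "Gs n \<subseteq> {p. p permutes {..<(2::nat)^(2*n)}} \<times> {p. p permutes {..<(2::nat)^(2*n)}}"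
    by (auto simp: Gs_def)
  moreover have "finite ({p. p permutes {..<(2::nat)^(2*n)}} \<times> {p. p permutes {..<(2::nat)^(2*n)}})"
    by (intro finite_cartesian_product finite_permutations) auto
  ultimately show ?thesis by (rule finite_subset)
qed

lemma id_Gs: "(id, id) \<in> Gs n"
  by (simp add: Gs_def permutes_id)

lemma finite_PK: "finite (perms_K n K)"
proof -
  have "perms_K n K \<subseteq> {p. p permutes {..<(2::nat)^(2*n)}}" by (auto simp: perms_K_def is_perm_def)
  then show ?thesis by (rule finite_subset) (intro finite_permutations, simp)
qed

lemma shift_linv:
  fixes M k i :: nat assumes "i < M"
  shows "((i + k) mod M + (M - k mod M)) mod M = i"
proof -
  have M: "0 < M" using assms by simp
  have "k mod M < M" using M by simp
  have "k + (M - k mod M) = M * (k div M) + M"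
    using mult_div_mod_eq[of M k] \<open>k mod M < M\<close> by linarith
  then have "k + (M - k mod M) = M * (k div M + 1)" by simp
  then have e: "i + k + (M - k mod M) = i + M * (k div M + 1)" by simp
  have "((i + k) mod M + (M - k mod M)) mod M = (i + k + (M - k mod M)) mod M"
    by (rule mod_add_left_eq)
  also have "\<dots> = (i + M * (k div M + 1)) mod M" by (simp only: e)
  also have "\<dots> = i mod M" by (rule mod_mult_self2)
  also have "\<dots> = i" using assms by simp
  finally show ?thesis .
qed

lemma shift_inj: "inj_on (\<lambda>i. (i + k) mod M) {..<(M::nat)}"
proof (rule inj_on_inverseI[where g="\<lambda>j. (j + (M - k mod M)) mod M"])
  fix i assume "i \<in> {..<M}" then show "((i + k) mod M + (M - k mod M)) mod M = i"
    by (intro shift_linv) auto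
qed

lemma shift_bij: "0 < M \<Longrightarrow> bij_betw (\<lambda>i. (i + k) mod M) {..<(M::nat)} {..<M}"
  unfolding bij_betw_def using shift_inj
  by (auto intro!: endo_inj_surj[OF finite_lessThan] shift_inj)

definition sh :: "nat \<Rightarrow> (nat \<Rightarrow> nat) \<Rightarrow> nat set \<Rightarrow> nat \<Rightarrow> nat \<Rightarrow> nat" where
  "sh M e A k a = (if a \<in> A then e ((inv_into {..<M} e a + k) mod M) else a)"

lemma sh_bij:
  assumes e: "bij_betw e {..<M} A" and M: "0 < M"
  shows "sh M e A k permutes A"
proof (rule bij_imp_permutes)
  have b1: "bij_betw (inv_into {..<M} e) A {..<M}" by (rule bij_betw_inv_into[OF e])
  have b2: "bij_betw (e \<circ> (\<lambda>i. (i + k) mod M)) {..<M} A" by (rule bij_betw_trans[OF shift_bij[OF M] e])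
  have "bij_betw (e \<circ> (\<lambda>i. (i + k) mod M) \<circ> inv_into {..<M} e) A A"
    by (rule bij_betw_trans[OF b1 b2])
  then show "bij_betw (sh M e A k) A A"
    by (rule bij_betw_cong[THEN iffD1, rotated]) (simp add: sh_def)
qed (simp add: sh_def)

lemma sh_in: "bij_betw e {..<M} A \<Longrightarrow> 0 < M \<Longrightarrow> a \<in> A \<Longrightarrow> sh M e A k a \<in> A"
  using sh_bij permutes_in_image by metis

lemma sh_out: "a \<notin> A \<Longrightarrow> sh M e A k a = a"
  by (simp add: sh_def)

lemma sh_inj_k:
  assumes e: "bij_betw e {..<M} A" and a: "a \<in> A"
  shows "inj_on (\<lambda>k. sh M e A k a) {..<M}"
proof
  fix k k' assume k: "k \<in> {..<M}" "k' \<in> {..<M}" and eq: "sh M e A k a = sh M e A k' a"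
  define j where "j = inv_into {..<M} e a"
  have M: "0 < M" using k by auto
  have "e ((j + k) mod M) = e ((j + k') mod M)" using eq a by (simp add: sh_def j_def)
  then have "(j + k) mod M = (j + k') mod M"
    using e M by (auto simp: bij_betw_def inj_on_def)
  then have "(k + j) mod M = (k' + j) mod M" by (simp add: add.commute)
  from inj_onD[OF shift_inj[of j M] this] k show "k = k'" by simp
qed

lemma count_inj:
  assumes "inj_on f {..<(M::nat)}" "finite B" "\<And>k. k < M \<Longrightarrow> P k \<Longrightarrow> f k \<in> B"
  shows "card {k\<in>{..<M}. P k} \<le> card B"
proof -
  have "inj_on f {k\<in>{..<M}. P k}" using assms(1) by (rule inj_on_subset) auto
  moreover have "f ` {k\<in>{..<M}. P k} \<subseteq> B" using assms(3) by auto
  ultimately show ?thesis using assms(2) by (rule card_inj_on_le)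
qed

lemma card_preimage:
  assumes p: "p permutes S" and X: "X \<subseteq> S"
  shows "card {a\<in>S. p a \<in> X} = card X"
proof -
  have "p ` {a\<in>S. p a \<in> X} = X"
  proof
    show "p ` {a\<in>S. p a \<in> X} \<subseteq> X" by auto
    show "X \<subseteq> p ` {a\<in>S. p a \<in> X}"
    proof
      fix x assume x: "x \<in> X"
      then have "x \<in> p ` S" using X permutes_image[OF p] by auto
      then show "x \<in> p ` {a\<in>S. p a \<in> X}" using x by auto
    qed
  qed
  moreover have "inj p" using p by (rule permutes_inj)
  ultimately show ?thesis by (metis card_image inj_on_subset subset_UNIV)
qed

lemma struct_lemma:
  assumes n: "1 \<le> n" and \<phi>: "\<phi> \<in> perms_K n K"
  shows "\<exists>\<phi>' c. \<phi>' permutes {..<2^(2*n)} \<and> (\<forall>k<(2::nat)^n. c k \<in> Gs n \<and> act (c k) \<phi>' = \<phi>')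
     \<and> (\<forall>a. card {k\<in>{..<(2::nat)^n}. \<phi> (fst (c k) a) \<noteq> \<phi>' (fst (c k) a)} \<le> K)
     \<and> (\<forall>a\<in>Xs n. card {k\<in>{..<(2::nat)^n}. \<phi> (fst (c k) a) \<in> Xs n} \<le> K)"
proof -
  define N :: nat where "N = 2^(2*n)"
  define M :: nat where "M = 2^n"
  define X where "X = Xs n"
  have NM: "N = M * M" by (simp add: N_def M_def pow2n)
  have M2: "2 \<le> M" using power_increasing[OF n, of "2::nat"] by (simp add: M_def)
  have XN: "X \<subseteq> {..<N}" using Xs_sub by (simp add: X_def N_def)
  have cX: "card X = M" by (simp add: X_def M_def card_Xs)
  have fX: "finite X" using XN finite_subset by blast
  have p: "\<phi> permutes {..<N}" and cK: "card (zero_pairs n \<phi>) = K"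
    using \<phi> by (auto simp: perms_K_def is_perm_def N_def)
  define S0 where "S0 = {a\<in>X. \<phi> a \<in> X}"
  have cS0: "card S0 = K" using cK by (simp add: S0_def X_def card_zp)
  have S0X: "S0 \<subseteq> X" by (auto simp: S0_def)
  define Q where "Q = {a\<in>{..<N}. \<phi> a \<in> X}"
  have cQ: "card Q = M" using card_preimage[OF p XN] cX by (simp add: Q_def)
  have XQ: "X \<inter> Q = S0" using XN by (auto simp: Q_def S0_def)
  define V where "V = {..<N} - (X \<union> Q)"
  have "card X + card Q = card (X \<union> Q) + card (X \<inter> Q)"
    by (rule card_Un_Int) (use fX in \<open>auto simp: Q_def\<close>)
  then have cXQ: "card (X \<union> Q) = 2 * M - K" using cX cQ XQ cS0 by simp
  have "K \<le> M" using cS0 S0X cX fX card_mono by metis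
  have "card V = card {..<N} - card (X \<union> Q)"
    unfolding V_def by (rule card_Diff_subset) (use XN fX in \<open>auto simp: Q_def intro: finite_subset\<close>)
  moreover have "2 * M \<le> N" using M2 NM by simp
  ultimately have "K \<le> card V" using cXQ \<open>K \<le> M\<close> by simp
  then obtain U where UV: "U \<subseteq> V" and cU: "card U = K" and fU: "finite U"
    by (rule obtain_subset_with_card_n)
  have fS0: "finite S0" using fX S0X finite_subset by blast
  obtain \<sigma> where \<sigma>: "bij_betw \<sigma> S0 U"
    using finite_same_card_bij[OF fS0 fU] cS0 cU by auto
  have S0U: "S0 \<inter> U = {}" using UV S0X by (auto simp: V_def)
  define \<tau> where "\<tau> a = (if a \<in> S0 then \<sigma> a else if a \<in> U then inv_into S0 \<sigma> a else a)" for a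
  have "bij_betw \<tau> (S0 \<union> U) (U \<union> S0)"
  proof (rule bij_betw_combine)
    show "bij_betw \<tau> S0 U" using \<sigma> by (rule bij_betw_cong[THEN iffD1, rotated]) (simp add: \<tau>_def)
    show "bij_betw \<tau> U S0" using bij_betw_inv_into[OF \<sigma>]
      by (rule bij_betw_cong[THEN iffD1, rotated]) (use S0U in \<open>auto simp: \<tau>_def\<close>)
    show "U \<inter> S0 = {}" using S0U by auto
  qed
  then have \<tau>p: "\<tau> permutes (S0 \<union> U)"
    by (intro bij_imp_permutes) (auto simp: \<tau>_def Un_commute)
  have S0UN: "S0 \<union> U \<subseteq> {..<N}" using S0X XN UV by (auto simp: V_def)
  define \<phi>' where "\<phi>' = \<phi> \<circ> \<tau>"
  have p': "\<phi>' permutes {..<N}"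
    unfolding \<phi>'_def by (intro permutes_compose p permutes_subset[OF \<tau>p S0UN])
  define Y where "Y = {a\<in>{..<N}. \<phi>' a \<in> X}"
  have cY: "card Y = M" using card_preimage[OF p' XN] cX by (simp add: Y_def)
  have fY: "finite Y" by (simp add: Y_def)
  have XY: "X \<inter> Y = {}"
  proof (safe)
    fix a assume a: "a \<in> X" "a \<in> Y"
    show "a \<in> {}"
    proof (cases "a \<in> S0")
      case True
      then have "\<tau> a \<in> U" using \<sigma> by (auto simp: \<tau>_def bij_betw_def)
      then have "\<phi> (\<tau> a) \<notin> X" using UV by (auto simp: V_def Q_def)
      then show ?thesis using a by (simp add: Y_def \<phi>'_def)
    next
      case False
      then have "a \<notin> U" using a UV by (auto simp: V_def)
      then have "\<tau> a = a" using False by (simp add: \<tau>_def)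
      then show ?thesis using a False by (simp add: Y_def \<phi>'_def S0_def)
    qed
  qed
  have UY: "U \<subseteq> Y"
  proof
    fix u assume u: "u \<in> U"
    then have "\<tau> u \<in> S0" using S0U bij_betw_inv_into[OF \<sigma>] by (auto simp: \<tau>_def bij_betw_def)
    then show "u \<in> Y" using u S0UN by (auto simp: Y_def \<phi>'_def S0_def)
  qed
  have YN: "Y \<subseteq> {..<N}" by (auto simp: Y_def)
  have D0: "\<phi> a \<noteq> \<phi>' a \<Longrightarrow> a \<in> S0 \<union> U" for a
    by (auto simp: \<phi>'_def \<tau>_def split: if_splits)
  have M0: "0 < M" using M2 by simp
  obtain e2 where e2: "bij_betw e2 {..<M} Y" using finite_same_card_bij[of "{..<M}" Y] fY cY by auto
  define e1 where "e1 = (\<lambda>x::nat. x * 2^n)"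
  have e1: "bij_betw e1 {..<M} X" by (auto simp: bij_betw_def inj_on_def e1_def X_def Xs_def M_def)
  define \<alpha> where "\<alpha> k = sh M e1 X k \<circ> sh M e2 Y k" for k
  define \<beta> where "\<beta> k = \<phi>' \<circ> inv_into UNIV (\<alpha> k) \<circ> inv_into UNIV \<phi>'" for k
  define c where "c k = (\<alpha> k, \<beta> k)" for k
  have sh1: "sh M e1 X k permutes X" for k by (rule sh_bij[OF e1 M0])
  have sh2: "sh M e2 Y k permutes Y" for k by (rule sh_bij[OF e2 M0])
  have \<alpha>p: "\<alpha> k permutes {..<N}" for k
    unfolding \<alpha>_def by (intro permutes_compose permutes_subset[OF sh1 XN] permutes_subset[OF sh2 YN])
  have \<alpha>X: "\<alpha> k a = sh M e1 X k a" if "a \<in> X" for k a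
  proof -
    have "a \<notin> Y" using that XY by auto
    then show ?thesis by (simp add: \<alpha>_def sh_out)
  qed
  have \<alpha>Y: "\<alpha> k a = sh M e2 Y k a" if "a \<in> Y" for k a
  proof -
    have "sh M e2 Y k a \<in> Y" by (rule sh_in[OF e2 M0 that])
    then have "sh M e2 Y k a \<notin> X" using XY by auto
    then show ?thesis by (simp add: \<alpha>_def sh_out)
  qed
  have \<alpha>O: "\<alpha> k a = a" if "a \<notin> X" "a \<notin> Y" for k a
    using that by (auto simp: \<alpha>_def sh_out)
  have \<alpha>XX: "\<alpha> k ` X = X" for k
  proof -
    have "\<alpha> k ` X = sh M e1 X k ` X" using \<alpha>X by auto
    then show ?thesis using permutes_image[OF sh1] by simp
  qed
  have \<alpha>YY: "\<alpha> k ` Y = Y" for k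
  proof -
    have "\<alpha> k ` Y = sh M e2 Y k ` Y" using \<alpha>Y by auto
    then show ?thesis using permutes_image[OF sh2] by simp
  qed
  have invY: "inv_into UNIV \<phi>' ` X = Y"
  proof
    show "inv_into UNIV \<phi>' ` X \<subseteq> Y"
    proof
      fix y assume "y \<in> inv_into UNIV \<phi>' ` X"
      then obtain x where x: "x \<in> X" "y = inv_into UNIV \<phi>' x" by auto
      have "y \<in> {..<N}" using x XN permutes_inv[OF p'] permutes_in_image by (metis subsetD)
      then show "y \<in> Y" using x permutes_inverses(1)[OF p'] by (simp add: Y_def)
    qed
    show "Y \<subseteq> inv_into UNIV \<phi>' ` X"
    proof
      fix y assume "y \<in> Y"
      then show "y \<in> inv_into UNIV \<phi>' ` X" using permutes_inverses(2)[OF p', of y]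
        by (auto simp: Y_def image_iff intro!: bexI[of _ "\<phi>' y"])
    qed
  qed
  have \<phi>'Y: "\<phi>' ` Y = X"
    using invY permutes_inverses(1)[OF p'] by (auto simp: image_iff)
  have cG: "c k \<in> Gs n" for k
  proof -
    have "\<beta> k permutes {..<N}"
      unfolding \<beta>_def by (intro permutes_compose permutes_inv p' \<alpha>p)
    moreover have "\<beta> k ` X = X"
    proof -
      have "\<beta> k ` X = \<phi>' ` (inv_into UNIV (\<alpha> k) ` (inv_into UNIV \<phi>' ` X))"
        by (simp add: \<beta>_def image_comp)
      also have "\<dots> = X" using invY inv_image_eq[OF \<alpha>p \<alpha>YY] \<phi>'Y by simp
      finally show ?thesis .
    qed
    ultimately show ?thesis using \<alpha>p \<alpha>XX by (simp add: Gs_def c_def N_def X_def)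
  qed
  have cfix: "act (c k) \<phi>' = \<phi>'" for k
    by (simp add: act_def c_def \<beta>_def fun_eq_iff permutes_inverses[OF p'] permutes_inverses[OF \<alpha>p])
  have count1: "card {k\<in>{..<M}. \<phi> (\<alpha> k a) \<noteq> \<phi>' (\<alpha> k a)} \<le> K" for a
  proof (cases "a \<in> X")
    case True
    have "card {k\<in>{..<M}. \<phi> (\<alpha> k a) \<noteq> \<phi>' (\<alpha> k a)} \<le> card S0"
    proof (rule count_inj[where f="\<lambda>k. \<alpha> k a"])
      show "inj_on (\<lambda>k. \<alpha> k a) {..<M}" using sh_inj_k[OF e1 True] \<alpha>X[OF True] by simp
      fix k assume "\<phi> (\<alpha> k a) \<noteq> \<phi>' (\<alpha> k a)"
      then have "\<alpha> k a \<in> S0 \<union> U" by (rule D0)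
      moreover have "\<alpha> k a \<in> X" using \<alpha>XX True by blast
      ultimately show "\<alpha> k a \<in> S0" using UY XY by auto
    qed (rule fS0)
    then show ?thesis using cS0 by simp
  next
    case nX: False
    show ?thesis
    proof (cases "a \<in> Y")
      case True
      have "card {k\<in>{..<M}. \<phi> (\<alpha> k a) \<noteq> \<phi>' (\<alpha> k a)} \<le> card U"
      proof (rule count_inj[where f="\<lambda>k. \<alpha> k a"])
        show "inj_on (\<lambda>k. \<alpha> k a) {..<M}" using sh_inj_k[OF e2 True] \<alpha>Y[OF True] by simp
        fix k assume "\<phi> (\<alpha> k a) \<noteq> \<phi>' (\<alpha> k a)"
        then have "\<alpha> k a \<in> S0 \<union> U" by (rule D0)
        moreover have "\<alpha> k a \<in> Y" using \<alpha>YY True by blast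
        ultimately show "\<alpha> k a \<in> U" using S0X XY by auto
      qed (rule fU)
      then show ?thesis using cU by simp
    next
      case False
      have "{k\<in>{..<M}. \<phi> (\<alpha> k a) \<noteq> \<phi>' (\<alpha> k a)} = {}"
        using D0[of a] \<alpha>O[OF nX False] nX False S0X UY by auto
      then show ?thesis by (metis card.empty le0)
    qed
  qed
  have count2: "card {k\<in>{..<M}. \<phi> (\<alpha> k a) \<in> X} \<le> K" if a: "a \<in> X" for a
  proof -
    have "card {k\<in>{..<M}. \<phi> (\<alpha> k a) \<in> X} \<le> card S0"
    proof (rule count_inj[where f="\<lambda>k. \<alpha> k a"])
      show "inj_on (\<lambda>k. \<alpha> k a) {..<M}" using sh_inj_k[OF e1 a] \<alpha>X[OF a] by simp
      fix k assume "\<phi> (\<alpha> k a) \<in> X"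
      moreover have "\<alpha> k a \<in> X" using \<alpha>XX a by blast
      ultimately show "\<alpha> k a \<in> S0" by (simp add: S0_def)
    qed (rule fS0)
    then show ?thesis using cS0 by simp
  qed
  show ?thesis
    apply (rule exI[of _ \<phi>'], rule exI[of _ c])
    using p' cG cfix count1 count2 by (simp add: N_def M_def c_def X_def)
qed

lemma act_perm: "g \<in> Gs n \<Longrightarrow> \<phi> permutes {..<2^(2*n)} \<Longrightarrow> act g \<phi> permutes {..<2^(2*n)}"
  by (cases g) (auto simp: Gs_def act_def intro!: permutes_compose)

lemma succ_le_1:
  assumes W: "0 < W" and P: "\<psi> permutes {..<(2::nat)^(2*n)}"
    and U: "\<And>t. t \<le> T \<Longrightarrow> unitary_mat (qdim n W) (U t)"
  shows "success_fixed n W U sel out T \<psi> \<le> 1"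
proof -
  have "success_fixed n W U sel out T \<psi> \<le> (\<Sum>j<qdim n W. (cmod (run n W U sel \<psi> T j))\<^sup>2)"
    unfolding success_fixed_def by (rule sum_mono2) auto
  also have "\<dots> = 1" using run_sqn[OF W P U, where t=T and sel=sel] by (simp add: sqn_def)
  finally show ?thesis .
qed

lemma per_phi:
  assumes W: "0 < W" and U: "\<And>t. t \<le> T \<Longrightarrow> unitary_mat (qdim n W) (U t)"
    and \<phi>: "\<phi> \<in> perms_K n K" and K1: "1 \<le> K"
  shows "(\<Sum>g\<in>Gs n. success_fixed n W U sel out T (act g \<phi>))
     \<le> real (card (Gs n)) * (8 * (real T + 1)^2 * real K / 2^n)"
proof (cases "n = 0")
  case True
  have "(\<Sum>g\<in>Gs n. success_fixed n W U sel out T (act g \<phi>)) \<le> (\<Sum>g\<in>Gs n. 1)"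
  proof (rule sum_mono)
    fix g assume g: "g \<in> Gs n"
    have "act g \<phi> permutes {..<2^(2*n)}"
      using act_PK[OF g \<phi>] by (simp add: perms_K_def is_perm_def)
    then show "success_fixed n W U sel out T (act g \<phi>) \<le> 1" by (rule succ_le_1[OF W _ U])
  qed
  also have "\<dots> \<le> real (card (Gs n)) * (8 * (real T + 1)^2 * real K / 2^n)"
  proof -
    have "1 \<le> 8 * (real T + 1)^2 * real K"
    proof -
      have A: "1 \<le> (real T + 1)^2" by (rule one_le_power) simp
      have B: "1 \<le> real K" using K1 by simp
      have "1 * 1 \<le> (real T + 1)^2 * real K" by (rule mult_mono[OF A B]) simp_all
      then have "1 \<le> (real T + 1)^2 * real K" by simp
      then show ?thesis by simp
    qed
    then have "real (card (Gs n)) * 1 \<le> real (card (Gs n)) * (8 * (real T + 1)^2 * real K)"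
      by (rule mult_left_mono) simp
    then show ?thesis using True by simp
  qed
  finally show ?thesis .
next
  case False
  then have n: "1 \<le> n" by simp
  define M :: nat where "M = 2^n"
  define X where "X = Xs n"
  have M0: "0 < M" by (simp add: M_def)
  have p: "\<phi> permutes {..<2^(2*n)}" using \<phi> by (simp add: perms_K_def is_perm_def)
  obtain \<phi>' c where p': "\<phi>' permutes {..<2^(2*n)}"
    and cG: "\<And>k. k < M \<Longrightarrow> c k \<in> Gs n" and cfix: "\<And>k. k < M \<Longrightarrow> act (c k) \<phi>' = \<phi>'"
    and c1: "\<And>a. card {k\<in>{..<M}. \<phi> (fst (c k) a) \<noteq> \<phi>' (fst (c k) a)} \<le> K"
    and c2: "\<And>a. a \<in> X \<Longrightarrow> card {k\<in>{..<M}. \<phi> (fst (c k) a) \<in> X} \<le> K"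
    using struct_lemma[OF n \<phi>] unfolding M_def X_def by blast
  define F where "F g = success_fixed n W U sel out T (act g \<phi>)" for g
  have step: "(\<Sum>k<M. F (gcomp g (c k))) \<le> (8 * real T ^ 2 + 2) * real K" if g: "g \<in> Gs n" for g
  proof -
    obtain \<alpha> \<beta> where gab: "g = (\<alpha>, \<beta>)" by (cases g)
    have b: "\<beta> permutes {..<2^(2*n)}" "\<beta> ` X = X" using g by (auto simp: Gs_def gab X_def)
    have bX: "\<And>y. \<beta> y \<in> X \<longleftrightarrow> y \<in> X" using perm_X_iff[OF b] .
    have aX: "\<alpha> ` X = X" using g by (auto simp: Gs_def gab X_def)
    define \<psi> where "\<psi> k = act g (act (c k) \<phi>)" for k
    define \<psi>' where "\<psi>' = act g \<phi>'"
    have \<psi>eq: "F (gcomp g (c k)) = success_fixed n W U sel out T (\<psi> k)" for k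
      by (simp add: F_def \<psi>_def act_gcomp)
    have \<psi>'eq: "\<psi>' = act g (act (c k) \<phi>')" if "k < M" for k using cfix[OF that] by (simp add: \<psi>'_def)
    have "(\<Sum>k<M. success_fixed n W U sel out T (\<psi> k)) \<le> (8 * real T ^ 2 + 2) * real K"
    proof (rule per_g[OF W U])
      show "\<psi>' permutes {..<2^(2*n)}" unfolding \<psi>'_def by (rule act_perm[OF g p'])
      show "\<psi> k permutes {..<2^(2*n)}" if "k < M" for k
        unfolding \<psi>_def by (intro act_perm[OF g] act_perm[OF cG[OF that] p])
      show "card {k\<in>{..<M}. \<psi> k a \<noteq> \<psi>' a} \<le> K" for a
      proof -
        have "{k\<in>{..<M}. \<psi> k a \<noteq> \<psi>' a} \<subseteq> {k\<in>{..<M}. \<phi> (fst (c k) (\<alpha> a)) \<noteq> \<phi>' (fst (c k) (\<alpha> a))}"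
        proof safe
          fix k assume k: "k < M" and ne: "\<psi> k a \<noteq> \<psi>' a" and eq: "\<phi> (fst (c k) (\<alpha> a)) = \<phi>' (fst (c k) (\<alpha> a))"
          have "\<psi> k a = \<psi>' a" using \<psi>'eq[OF k] eq by (simp add: \<psi>_def act_def gab)
          then show False using ne by simp
        qed
        then have "card {k\<in>{..<M}. \<psi> k a \<noteq> \<psi>' a} \<le> card {k\<in>{..<M}. \<phi> (fst (c k) (\<alpha> a)) \<noteq> \<phi>' (fst (c k) (\<alpha> a))}"
          by (intro card_mono) auto
        then show ?thesis using c1 le_trans by blast
      qed
      show "card {k\<in>{..<M}. out j \<in> zero_pairs n (\<psi> k)} \<le> K" for j
      proof (cases "fst (out j) < 2^n")
        case True
        define b where "b = \<alpha> (fst (out j) * 2^n)"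
        have bX': "b \<in> X" using True aX by (auto simp: b_def X_def Xs_def)
        have "{k\<in>{..<M}. out j \<in> zero_pairs n (\<psi> k)} \<subseteq> {k\<in>{..<M}. \<phi> (fst (c k) b) \<in> X}"
        proof safe
          fix k assume k: "k < M" and z: "out j \<in> zero_pairs n (\<psi> k)"
          obtain x y where xy: "out j = (x, y)" by (cases "out j")
          have "\<psi> k (x * 2^n) \<in> X" using z by (auto simp: xy zero_pairs_def X_def Xs_def)
          then have "snd (c k) (\<phi> (fst (c k) b)) \<in> X"
            by (simp add: \<psi>_def act_def gab b_def xy bX)
          moreover have "snd (c k) permutes {..<2^(2*n)}" "snd (c k) ` X = X"
            using cG[OF k] by (auto simp: Gs_def X_def split: prod.splits)
          ultimately show "\<phi> (fst (c k) b) \<in> X" using perm_X_iff by metis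
        qed
        then have "card {k\<in>{..<M}. out j \<in> zero_pairs n (\<psi> k)} \<le> card {k\<in>{..<M}. \<phi> (fst (c k) b) \<in> X}"
          by (intro card_mono) auto
        then show ?thesis using c2[OF bX'] le_trans by blast
      next
        case False
        then have "{k\<in>{..<M}. out j \<in> zero_pairs n (\<psi> k)} = {}"
          by (auto simp: zero_pairs_def split: prod.splits)
        then show ?thesis by (metis card.empty le0)
      qed
    qed
    then show ?thesis by (simp add: \<psi>eq)
  qed
  have "real M * (\<Sum>g\<in>Gs n. F g) = (\<Sum>k<M. \<Sum>g\<in>Gs n. F (gcomp g (c k)))"
    using sum_gcomp[OF cG, where h=F] by simp
  also have "\<dots> = (\<Sum>g\<in>Gs n. \<Sum>k<M. F (gcomp g (c k)))" by (rule sum.swap)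
  also have "\<dots> \<le> (\<Sum>g\<in>Gs n. (8 * real T ^ 2 + 2) * real K)" by (rule sum_mono) (rule step)
  also have "\<dots> \<le> real (card (Gs n)) * (8 * (real T + 1)^2 * real K)"
  proof -
    have "8 * real T ^ 2 + 2 \<le> 8 * (real T + 1)^2" by (simp add: power2_eq_square algebra_simps)
    then have "(8 * real T ^ 2 + 2) * real K \<le> 8 * (real T + 1)^2 * real K" by (rule mult_right_mono) simp
    then show ?thesis by (simp add: mult_left_mono)
  qed
  finally have "real M * (\<Sum>g\<in>Gs n. F g) \<le> real (card (Gs n)) * (8 * (real T + 1)^2 * real K)" .
  then show ?thesis using M0 by (simp add: F_def M_def field_simps)
qed

theorem lemma4:
  fixes n K W T :: nat
    and U :: "nat \<Rightarrow> nat \<Rightarrow> nat \<Rightarrow> complex"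
    and sel :: "nat \<Rightarrow> bool"
    and out :: "nat \<Rightarrow> nat \<times> nat"
    and \<epsilon> :: real
  assumes "1 \<le> K" and "K \<le> 2^n"
    and "0 < W"
    and "\<And>t. t \<le> T \<Longrightarrow> unitary_mat (qdim n W) (U t)"
    and "\<epsilon> = success_prob n K W U sel out T"
    and "\<epsilon> > 0"
  shows "\<epsilon> \<le> 8 * (real T + 1)^2 * real K / 2^n"
proof -
  define B where "B = 8 * (real T + 1)^2 * real K / 2^n"
  define P where "P = perms_K n K"
  define S where "S \<phi> = success_fixed n W U sel out T \<phi>" for \<phi>
  have B0: "0 \<le> B" by (simp add: B_def)
  have G0: "0 < card (Gs n)" using finite_Gs id_Gs card_gt_0_iff by blast
  have "real (card (Gs n)) * (\<Sum>\<phi>\<in>P. S \<phi>) = (\<Sum>g\<in>Gs n. \<Sum>\<phi>\<in>P. S (act g \<phi>))"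
    using sum_act[where h=S and K=K] by (simp add: P_def)
  also have "\<dots> = (\<Sum>\<phi>\<in>P. \<Sum>g\<in>Gs n. S (act g \<phi>))" by (rule sum.swap)
  also have "\<dots> \<le> (\<Sum>\<phi>\<in>P. real (card (Gs n)) * B)"
    by (rule sum_mono) (unfold S_def B_def P_def, rule per_phi[OF assms(3) assms(4) _ assms(1)])
  also have "\<dots> = real (card (Gs n)) * (real (card P) * B)" by simp
  finally have "(\<Sum>\<phi>\<in>P. S \<phi>) \<le> real (card P) * B" using G0 by simp
  then have "(\<Sum>\<phi>\<in>P. S \<phi>) / real (card P) \<le> B"
    using B0 by (cases "card P = 0") (simp_all add: divide_le_eq mult.commute)
  then show ?thesis using assms(5) by (simp add: success_prob_def P_def S_def B_def)
qed

end
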